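(* Let $n\ge t\ge 1$ be integers. The dimensions of the reduced homology groups of $\Omega^n_t$ do not depend on the ground field $\Bbbk$, and for every integer $p$, $$\dim_\Bbbk \widetilde{H}_p(\Omega^n_t;\Bbbk)=\begin{cases}\delta_{p+2,\frac{2n}{t+1}} & \text{if } n\equiv 0\pmod{t+1},\\ \delta_{p+3,\frac{2(n+1)}{t+1}} & \text{if } n\equiv t\pmod{t+1},\\ 0&\text{otherwise,}\end{cases}$$ where $\delta$ is the Kronecker delta.
   Context: For integers $n\ge t\ge 1$, $\Omega^n_t$ is the simplicial complex on vertex set $\{1,\dots,n\}$ whose facets are the sets $\{1,\dots,n\}\setminus\{i,i+1,\dots,i+t-1\}$ for $i=1,\dots,n-t+1$ (so $\Omega^t_t=\{\emptyset\}$, the irrelevant complex). $\widetilde{H}_p(\cdot;\Bbbk)$ denotes reduced simplicial homology over the field $\Bbbk$. *)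

theory Defs
  imports Complex_Main "HOL-Library.Function_Algebras"
begin

definition omega_facets :: "nat \<Rightarrow> nat \<Rightarrow> nat set set" where
  "omega_facets n t = {{1..n} - {i..i + t - 1} | i. 1 \<le> i \<and> i \<le> n - t + 1}"

definition omega :: "nat \<Rightarrow> nat \<Rightarrow> nat set set" where
  "omega n t = {\<sigma>. \<exists>F \<in> omega_facets n t. \<sigma> \<subseteq> F}"

text \<open>Simplicial chains (augmented, i.e. the empty face lives in degree -1) of a finite
  simplicial complex K on ordered vertices, with coefficients in a field 'k.\<close>

definition chains :: "nat set set \<Rightarrow> int \<Rightarrow> (nat set \<Rightarrow> 'k::field) set" where
  "chains K p = {c. \<forall>\<sigma>. c \<sigma> \<noteq> 0 \<longrightarrow> \<sigma> \<in> K \<and> int (card \<sigma>) = p + 1}"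

definition bsign :: "nat set \<Rightarrow> nat \<Rightarrow> 'k::field" where
  "bsign \<sigma> v = (-1) ^ card {u \<in> \<sigma>. u < v}"

definition boundary :: "nat set set \<Rightarrow> (nat set \<Rightarrow> 'k::field) \<Rightarrow> nat set \<Rightarrow> 'k" where
  "boundary K c \<tau> =
     (\<Sum>\<sigma> \<in> {\<sigma> \<in> K. \<tau> \<subseteq> \<sigma> \<and> card \<sigma> = Suc (card \<tau>)}. bsign \<sigma> (the_elem (\<sigma> - \<tau>)) * c \<sigma>)"

definition cycles :: "nat set set \<Rightarrow> int \<Rightarrow> (nat set \<Rightarrow> 'k::field) set" where
  "cycles K p = {c \<in> chains K p. boundary K c = 0}"

definition boundaries :: "nat set set \<Rightarrow> int \<Rightarrow> (nat set \<Rightarrow> 'k::field) set" where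
  "boundaries K p = boundary K ` chains K (p + 1)"

text \<open>dim of reduced homology H~_p(K; k) = dim Z_p - dim B_p (B_p is a subspace of Z_p).\<close>
definition red_homology_dim :: "'k::field itself \<Rightarrow> nat set set \<Rightarrow> int \<Rightarrow> nat" where
  "red_homology_dim TYPE('k) K p =
     vector_space.dim (\<lambda>(a::'k) c x. a * c x) (cycles K p :: (nat set \<Rightarrow> 'k) set)
     - vector_space.dim (\<lambda>(a::'k) c x. a * c x) (boundaries K p :: (nat set \<Rightarrow> 'k) set)"

end

theory Submission
  imports Defs
begin

interpretation V: vector_space "\<lambda>(a::'k::field) (c::nat set \<Rightarrow> 'k) x. a * c x"
  by unfold_locales (auto simp: fun_eq_iff algebra_simps)

lemma hom_bd: "module_hom (\<lambda>(a::'k::field) (c::nat set \<Rightarrow> 'k) x. a * c x) (\<lambda>(a::'k::field) (c::nat set \<Rightarrow> 'k) x. a * c x) (boundary K)"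
  unfolding module_hom_iff
  by (auto simp: V.module_axioms boundary_def fun_eq_iff sum.distrib sum_distrib_left algebra_simps)

definition ind :: "nat set \<Rightarrow> nat set \<Rightarrow> 'k::field" where "ind s = (\<lambda>r. if r = s then 1 else 0)"

lemma ind_inj: "inj (ind :: nat set \<Rightarrow> nat set \<Rightarrow> 'k::field)"
  by (rule injI) (metis ind_def one_neq_zero)

lemma sum_apply': "(\<Sum>x\<in>A. f x) r = (\<Sum>x\<in>A. f x r)"
  by (induction A rule: infinite_finite_induct) auto

lemma ind_indep: "V.independent ((ind :: nat set \<Rightarrow> nat set \<Rightarrow> 'k::field) ` F)"
  unfolding V.independent_explicit_module
proof (intro allI impI)
  fix T u v
  assume T: "finite T" "T \<subseteq> (ind :: nat set \<Rightarrow> nat set \<Rightarrow> 'k::field) ` F"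
    and s: "(\<Sum>v\<in>T. (\<lambda>x. u v * v x)) = 0" and v: "v \<in> T"
  from v T obtain s0 where s0: "v = ind s0" by auto
  have "0 = (\<Sum>v\<in>T. (\<lambda>x. u v * v x)) s0" using s by simp
  also have "\<dots> = (\<Sum>w\<in>T. u w * w s0)" by (simp add: sum_apply')
  also have "\<dots> = (\<Sum>w\<in>T. if w = v then u w else 0)"
  proof (rule sum.cong[OF refl])
    fix w assume "w \<in> T"
    then obtain s1 where "w = ind s1" using T by auto
    show "u w * w s0 = (if w = v then u w else 0)"
    proof (cases "s1 = s0")
      case True then show ?thesis using s0 \<open>w = ind s1\<close> by (simp add: ind_def)
    next
      case False
      then have "w s0 = 0" using \<open>w = ind s1\<close> by (simp add: ind_def)
      moreover have "v s0 = 1" using s0 by (simp add: ind_def)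
      ultimately have "w \<noteq> v" by auto
      then show ?thesis using \<open>w s0 = 0\<close> by simp
    qed
  qed
  also have "\<dots> = u v" using T v by simp
  finally show "u v = 0" by simp
qed

context
  fixes K :: "nat set set"
  assumes finK: "finite K"
begin

lemma chains_span: "chains K p = V.span ((ind :: nat set \<Rightarrow> nat set \<Rightarrow> 'k::field) ` {s\<in>K. int (card s) = p + 1})"
proof
  let ?F = "{s\<in>K. int (card s) = p + 1}"
  have fF: "finite ?F" using finK by simp
  show "chains K p \<subseteq> V.span ((ind :: nat set \<Rightarrow> nat set \<Rightarrow> 'k::field) ` ?F)"
  proof
    fix c :: "nat set \<Rightarrow> 'k" assume c: "c \<in> chains K p"
    have "c = (\<Sum>s\<in>?F. (\<lambda>x. c s * ind s x))"
    proof
      fix r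
      have "(\<Sum>s\<in>?F. (\<lambda>x. c s * ind s x)) r = (\<Sum>s\<in>?F. c s * ind s r)" by (simp add: sum_apply')
      also have "\<dots> = (\<Sum>s\<in>?F. if s = r then c r else 0)"
        by (rule sum.cong) (auto simp: ind_def)
      also have "\<dots> = c r" using c fF by (auto simp: chains_def)
      finally show "c r = (\<Sum>s\<in>?F. (\<lambda>x. c s * ind s x)) r" by simp
    qed
    also have "\<dots> \<in> V.span (ind ` ?F)"
      by (intro V.span_sum V.span_scale V.span_base) auto
    finally show "c \<in> V.span (ind ` ?F)" .
  qed
  have "V.subspace (chains K p :: (nat set \<Rightarrow> 'k) set)"
  proof -
    have a: "x s + y s \<noteq> 0 \<Longrightarrow> x s \<noteq> 0 \<or> y s \<noteq> 0" for x y :: "nat set \<Rightarrow> 'k" and s by auto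
    show ?thesis unfolding V.subspace_def chains_def
      by (auto dest!: a)
  qed
  moreover have "(ind :: nat set \<Rightarrow> nat set \<Rightarrow> 'k::field) ` ?F \<subseteq> chains K p"
    by (auto simp: chains_def ind_def split: if_splits)
  ultimately show "V.span ((ind :: nat set \<Rightarrow> nat set \<Rightarrow> 'k::field) ` ?F) \<subseteq> chains K p"
    by (rule V.span_minimal[rotated])
qed

lemma dim_chains: "V.dim (chains K p :: (nat set \<Rightarrow> 'k::field) set) = card {s\<in>K. int (card s) = p + 1}"
  unfolding chains_span
  by (simp add: V.dim_eq_card_independent ind_indep card_image inj_on_subset[OF ind_inj])

end

lemma span_disj:
  assumes ind: "V.independent (B :: (nat set \<Rightarrow> 'k::field) set)" and fin: "finite B" and AB: "A \<subseteq> B"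
    and x1: "x \<in> V.span A" and x2: "x \<in> V.span (B - A)"
  shows "x = 0"
proof -
  have fA: "finite A" using fin AB finite_subset by auto
  obtain u where u: "x = (\<Sum>v\<in>A. (\<lambda>r. u v * v r))" using x1 V.span_finite[OF fA] by auto
  obtain w where w: "x = (\<Sum>v\<in>B-A. (\<lambda>r. w v * v r))" using x2 V.span_finite[of "B - A"] fin by auto
  define c where "c v = (if v \<in> A then u v else - w v)" for v
  have "(\<Sum>v\<in>B. (\<lambda>r. c v * v r)) = (\<Sum>v\<in>A. (\<lambda>r. c v * v r)) + (\<Sum>v\<in>B-A. (\<lambda>r. c v * v r))"
    using fin AB by (metis (no_types, lifting) sum.subset_diff add.commute)
  also have "(\<Sum>v\<in>A. (\<lambda>r. c v * v r)) = x" unfolding u by (rule sum.cong) (auto simp: c_def)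
  also have "(\<Sum>v\<in>B-A. (\<lambda>r. c v * v r)) = - x" unfolding w
    by (simp add: c_def sum_negf[symmetric] fun_eq_iff sum_apply')
  finally have "(\<Sum>v\<in>B. (\<lambda>r. c v * v r)) = 0" by (simp add: fun_eq_iff)
  then have "\<forall>v\<in>B. c v = 0" using V.independentD[OF ind fin order_refl] by blast
  then have "\<forall>v\<in>A. u v = 0" using AB unfolding c_def by (metis subsetD)
  then show "x = 0" unfolding u by (simp add: fun_eq_iff sum_apply')
qed

lemma rank_nullity:
  fixes f :: "(nat set \<Rightarrow> 'k::field) \<Rightarrow> (nat set \<Rightarrow> 'k)"
  assumes hom: "module_hom (\<lambda>(a::'k::field) (c::nat set \<Rightarrow> 'k) x. a * c x) (\<lambda>(a::'k::field) (c::nat set \<Rightarrow> 'k) x. a * c x) f"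
    and fin: "finite E"
  shows "V.dim (V.span E \<inter> {x. f x = 0}) + V.dim (f ` V.span E) = V.dim (V.span E)"
proof -
  let ?W = "V.span E"
  let ?N = "?W \<inter> {x. f x = 0}"
  obtain A where A: "A \<subseteq> ?N" "V.independent A" "?N \<subseteq> V.span A" "card A = V.dim ?N"
    using V.basis_exists by blast
  obtain B where B: "A \<subseteq> B" "B \<subseteq> ?W" "V.independent B" "?W \<subseteq> V.span B"
    using V.maximal_independent_subset_extend[of A ?W] A by auto
  have fB: "finite B" using V.independent_span_bound[OF fin B(3)] B(2) by auto
  have spB: "V.span B = ?W"
    using B V.span_mono[OF B(2)] by (simp add: V.span_span subset_antisym)
  have dW: "V.dim ?W = card B" using V.dim_eq_card[OF spB B(3)] by simp
  have inj: "inj_on f (V.span (B - A))"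
  proof (subst module_hom.inj_on_iff_eq_0[OF hom], simp, intro ballI impI)
    fix x assume x: "x \<in> V.span (B - A)" "f x = 0"
    have "x \<in> ?W" using x(1) V.span_mono[of "B - A" B] spB by auto
    then have "x \<in> V.span A" using x(2) A(3) by auto
    then show "x = 0" using span_disj[OF B(3) fB B(1)] x(1) by blast
  qed
  have im: "f ` ?W = V.span (f ` (B - A))"
  proof -
    have "f ` ?W = V.span (f ` B)" using module_hom.span_image[OF hom, of B] spB by simp
    also have "\<dots> = V.span (f ` (B - A))"
    proof (rule subset_antisym)
      have "f ` B \<subseteq> V.span (f ` (B - A))"
      proof
        fix y assume "y \<in> f ` B"
        then obtain b where b: "b \<in> B" "y = f b" by auto
        show "y \<in> V.span (f ` (B - A))"
        proof (cases "b \<in> A")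
          case True then have "f b = 0" using A(1) by auto
          then show ?thesis using b V.span_zero by simp
        next
          case False then show ?thesis using b by (auto intro: V.span_base)
        qed
      qed
      then show "V.span (f ` B) \<subseteq> V.span (f ` (B - A))"
        by (simp add: V.span_minimal)
      show "V.span (f ` (B - A)) \<subseteq> V.span (f ` B)" by (rule V.span_mono) auto
    qed
    finally show ?thesis .
  qed
  have indim: "V.independent (f ` (B - A))"
    using module_hom.independent_injective_image[OF hom V.independent_mono[OF B(3)] inj] by auto
  have "V.dim (f ` ?W) = card (f ` (B - A))"
    unfolding im V.dim_span by (rule V.dim_eq_card_independent[OF indim])
  also have "\<dots> = card (B - A)"
    using card_image inj_on_subset[OF inj V.span_superset] by blast
  also have "\<dots> = card B - card A" using fB B(1) by (simp add: card_Diff_subset finite_subset)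
  finally show ?thesis using A(4) dW card_mono[OF fB B(1)] by simp
qed


locale fcx =
  fixes K :: "nat set set"
  assumes finK: "finite K" and finS: "\<And>s. s \<in> K \<Longrightarrow> finite s"
    and down: "\<And>s r. s \<in> K \<Longrightarrow> r \<subseteq> s \<Longrightarrow> r \<in> K"
begin

lemma bd_chains:
  assumes c: "c \<in> chains K (p + 1)"
  shows "boundary K c \<in> chains K p"
  unfolding chains_def mem_Collect_eq
proof (intro allI impI)
  fix \<tau> assume "boundary K c \<tau> \<noteq> 0"
  then have "\<exists>\<sigma>\<in>{\<sigma> \<in> K. \<tau> \<subseteq> \<sigma> \<and> card \<sigma> = Suc (card \<tau>)}. bsign \<sigma> (the_elem (\<sigma> - \<tau>)) * c \<sigma> \<noteq> 0"
    unfolding boundary_def by (meson sum.neutral)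
  then obtain \<sigma> where s: "\<sigma> \<in> K" "\<tau> \<subseteq> \<sigma>" "card \<sigma> = Suc (card \<tau>)" "c \<sigma> \<noteq> 0"
    by auto
  then show "\<tau> \<in> K \<and> int (card \<tau>) = p + 1" using c down by (auto simp: chains_def)
qed

lemma pair_cancel:
  assumes fr: "finite r" and ab: "a < b" and a: "a \<notin> r" and b: "b \<notin> r"
  shows "(bsign (insert a r) a * bsign (insert a (insert b r)) b :: 'k::field)
       + bsign (insert b r) b * bsign (insert a (insert b r)) a = 0"
proof -
  have e1: "{u \<in> insert a r. u < a} = {u\<in>r. u < a}" by auto
  have e2: "{u \<in> insert b r. u < b} = {u\<in>r. u < b}" by auto
  have e3: "card {u \<in> insert a (insert b r). u < b} = Suc (card {u\<in>r. u < b})"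
  proof -
    have "{u \<in> insert a (insert b r). u < b} = insert a {u\<in>r. u < b}" using ab by auto
    then show ?thesis using fr a by simp
  qed
  have e4: "{u \<in> insert a (insert b r). u < a} = {u\<in>r. u < a}" using ab by auto
  show ?thesis unfolding bsign_def e1 e2 e3 e4 by simp
qed

lemma bd_bd: "boundary K (boundary K c) = (0 :: nat set \<Rightarrow> 'k::field)"
proof
  fix \<rho>
  let ?Sup = "\<lambda>t. {s \<in> K. t \<subseteq> s \<and> card s = Suc (card t)}"
  let ?g = "\<lambda>\<tau> \<sigma>. bsign \<tau> (the_elem (\<tau> - \<rho>)) * (bsign \<sigma> (the_elem (\<sigma> - \<tau>)) * (c \<sigma> :: 'k))"
  have fS: "finite (?Sup t)" for t using finK by simp
  have "boundary K (boundary K c) \<rho> = (\<Sum>\<tau>\<in>?Sup \<rho>. \<Sum>\<sigma>\<in>?Sup \<tau>. ?g \<tau> \<sigma>)"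
    unfolding boundary_def by (simp add: sum_distrib_left)
  also have "\<dots> = (\<Sum>\<tau>\<in>?Sup \<rho>. \<Sum>\<sigma>\<in>{\<sigma>\<in>K. \<sigma> \<in> ?Sup \<tau>}. ?g \<tau> \<sigma>)"
    by (rule sum.cong) (auto intro!: sum.cong)
  also have "\<dots> = (\<Sum>\<sigma>\<in>K. \<Sum>\<tau>\<in>{\<tau>\<in>?Sup \<rho>. \<sigma> \<in> ?Sup \<tau>}. ?g \<tau> \<sigma>)"
    by (rule sum.swap_restrict) (use finK fS in auto)
  also have "\<dots> = 0"
  proof (rule sum.neutral, intro ballI)
    fix \<sigma> assume sK: "\<sigma> \<in> K"
    show "(\<Sum>\<tau>\<in>{\<tau>\<in>?Sup \<rho>. \<sigma> \<in> ?Sup \<tau>}. ?g \<tau> \<sigma>) = 0"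
    proof (cases "{\<tau>\<in>?Sup \<rho>. \<sigma> \<in> ?Sup \<tau>} = {}")
      case True then show ?thesis by (simp only: True sum.empty)
    next
      case False
      then obtain \<tau>0 where "\<tau>0 \<in> {\<tau>\<in>?Sup \<rho>. \<sigma> \<in> ?Sup \<tau>}" by blast
      then have t0: "\<tau>0 \<in> K" "\<rho> \<subseteq> \<tau>0" "card \<tau>0 = Suc (card \<rho>)" "\<tau>0 \<subseteq> \<sigma>" "card \<sigma> = Suc (card \<tau>0)"
        by simp_all
      have fs: "finite \<sigma>" using finS sK .
      have rs: "\<rho> \<subseteq> \<sigma>" using t0(2,4) by (rule order_trans)
      have fr: "finite \<rho>" using finite_subset[OF rs fs] .
      have "card (\<sigma> - \<rho>) = 2" using t0(3,5) card_Diff_subset[OF fr rs] by simp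
      then obtain a b where ab0: "\<sigma> - \<rho> = {a, b}" "a \<noteq> b" by (meson card_2_iff)
      obtain a' b' where ab: "\<sigma> - \<rho> = {a', b'}" "a' < b'"
      proof (cases "a < b")
        case True then show ?thesis using ab0 that by blast
      next
        case False then have "b < a" using ab0(2) by simp
        moreover have "\<sigma> - \<rho> = {b, a}" using ab0 by blast
        ultimately show ?thesis using that by blast
      qed
      have a: "a' \<notin> \<rho>" "a' \<in> \<sigma>" and b: "b' \<notin> \<rho>" "b' \<in> \<sigma>" using ab by auto
      have sig: "\<sigma> = insert a' (insert b' \<rho>)" using ab rs by auto
      have set: "{\<tau>\<in>?Sup \<rho>. \<sigma> \<in> ?Sup \<tau>} = {insert a' \<rho>, insert b' \<rho>}"
      proof (rule set_eqI, rule iffI)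
        fix \<tau> assume "\<tau> \<in> {\<tau>\<in>?Sup \<rho>. \<sigma> \<in> ?Sup \<tau>}"
        then have t: "\<rho> \<subseteq> \<tau>" "\<tau> \<subseteq> \<sigma>" "card \<tau> = Suc (card \<rho>)" by auto
        have ft: "finite \<tau>" using finite_subset[OF t(2) fs] .
        have "card (\<tau> - \<rho>) = 1" using t(3) card_Diff_subset[OF fr t(1)] by simp
        then obtain x where x: "\<tau> - \<rho> = {x}" by (meson card_1_singletonE)
        then have "x \<in> \<sigma> - \<rho>" using t by auto
        moreover have "\<tau> = insert x \<rho>" using x t by auto
        ultimately show "\<tau> \<in> {insert a' \<rho>, insert b' \<rho>}" using ab by auto
      next
        fix \<tau> show "\<tau> \<in> {insert a' \<rho>, insert b' \<rho>} \<Longrightarrow> \<tau> \<in> {\<tau>\<in>?Sup \<rho>. \<sigma> \<in> ?Sup \<tau>}"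
        proof -
          assume tt: "\<tau> \<in> {insert a' \<rho>, insert b' \<rho>}"
          have "\<tau> \<subseteq> \<sigma>" "\<rho> \<subseteq> \<tau>" using tt sig by auto
          moreover have "card \<tau> = Suc (card \<rho>)" using tt a b fr by auto
          moreover have "card \<sigma> = Suc (card \<tau>)" using tt a b fr sig ab(2) by auto
          ultimately show ?thesis using sK down[OF sK] by auto
        qed
      qed
      have ne: "insert a' \<rho> \<noteq> insert b' \<rho>" using a b ab by auto
      have t1: "the_elem (insert a' \<rho> - \<rho>) = a'" using a by (simp add: insert_Diff_if)
      have t2: "the_elem (insert b' \<rho> - \<rho>) = b'" using b by (simp add: insert_Diff_if)
      have t3: "\<sigma> - insert a' \<rho> = {b'}" using sig a b ab by auto
      have t4: "\<sigma> - insert b' \<rho> = {a'}" using sig a b ab by auto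
      have "(\<Sum>\<tau>\<in>{\<tau>\<in>?Sup \<rho>. \<sigma> \<in> ?Sup \<tau>}. ?g \<tau> \<sigma>) = ?g (insert a' \<rho>) \<sigma> + ?g (insert b' \<rho>) \<sigma>"
        unfolding set using ne by simp
      also have "\<dots> = (bsign (insert a' \<rho>) a' * bsign \<sigma> b' + bsign (insert b' \<rho>) b' * bsign \<sigma> a') * c \<sigma>"
        unfolding t1 t2 t3 t4 by (simp add: algebra_simps)
      also have "\<dots> = 0" unfolding sig using pair_cancel[OF fr ab(2) a(1) b(1), where 'k='k] by simp
      finally show ?thesis .
    qed
  qed
  finally show "boundary K (boundary K c) \<rho> = 0 \<rho>" by simp
qed

end

lemma dim_mono':
  assumes "S \<subseteq> T" "T \<subseteq> V.span E" "finite E"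
  shows "V.dim (S :: (nat set \<Rightarrow> 'k::field) set) \<le> V.dim T"
proof -
  obtain A where A: "A \<subseteq> S" "V.independent A" "S \<subseteq> V.span A" "card A = V.dim S"
    using V.basis_exists by blast
  obtain B where B: "B \<subseteq> T" "V.independent B" "T \<subseteq> V.span B" "card B = V.dim T"
    using V.basis_exists by blast
  have fB: "finite B" using V.independent_span_bound[OF assms(3) B(2)] B(1) assms(2) by auto
  have "A \<subseteq> V.span B" using A(1) assms(1) B(3) by auto
  then have "card A \<le> card B" using V.independent_span_bound[OF fB A(2)] by auto
  then show ?thesis using A B by simp
qed

lemma card_le_dim':
  assumes "I \<subseteq> T" "V.independent I" "T \<subseteq> V.span E" "finite E"
  shows "card (I :: (nat set \<Rightarrow> 'k::field) set) \<le> V.dim T"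
proof -
  obtain B where B: "B \<subseteq> T" "V.independent B" "T \<subseteq> V.span B" "card B = V.dim T"
    using V.basis_exists by blast
  have fB: "finite B" using V.independent_span_bound[OF assms(4) B(2)] B(1) assms(3) by auto
  have "I \<subseteq> V.span B" using assms(1) B(3) by auto
  then show ?thesis using V.independent_span_bound[OF fB assms(2)] B by auto
qed

lemma bsign_nz: "(bsign s v :: 'k::field) \<noteq> 0"
  by (simp add: bsign_def)

context fcx begin

lemma bd_ind: "boundary K (ind \<tau> :: nat set \<Rightarrow> 'k::field) \<rho> =
   (if \<tau> \<in> K \<and> \<rho> \<subseteq> \<tau> \<and> card \<tau> = Suc (card \<rho>) then bsign \<tau> (the_elem (\<tau> - \<rho>)) else 0)"
proof -
  have "boundary K (ind \<tau> :: nat set \<Rightarrow> 'k::field) \<rho> = (\<Sum>\<sigma>\<in>{\<sigma> \<in> K. \<rho> \<subseteq> \<sigma> \<and> card \<sigma> = Suc (card \<rho>)}.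
      if \<sigma> = \<tau> then bsign \<sigma> (the_elem (\<sigma> - \<rho>)) else 0)"
    unfolding boundary_def by (rule sum.cong) (auto simp: ind_def)
  also have "\<dots> = (if \<tau> \<in> K \<and> \<rho> \<subseteq> \<tau> \<and> card \<tau> = Suc (card \<rho>) then bsign \<tau> (the_elem (\<tau> - \<rho>)) else 0)"
    using finK by (simp add: sum.delta')
  finally show ?thesis .
qed

lemma chains_sub: "chains K p \<subseteq> V.span ((ind :: nat set \<Rightarrow> nat set \<Rightarrow> 'k::field) ` {s\<in>K. int (card s) = p + 1})"
  using chains_span[OF finK, of p, where 'k='k] by simp

lemma rn: "V.dim (cycles K p :: (nat set \<Rightarrow> 'k::field) set) + V.dim (boundaries K (p - 1) :: (nat set \<Rightarrow> 'k) set)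
   = card {s\<in>K. int (card s) = p + 1}"
proof -
  let ?E = "(ind :: nat set \<Rightarrow> nat set \<Rightarrow> 'k::field) ` {s\<in>K. int (card s) = p + 1}"
  have c: "chains K p = V.span ?E" using chains_span[OF finK] by simp
  have "cycles K p = V.span ?E \<inter> {x. boundary K x = 0}" unfolding cycles_def c[symmetric] by auto
  moreover have "boundaries K (p - 1) = boundary K ` V.span ?E" unfolding boundaries_def c[symmetric] by simp
  ultimately show ?thesis
    using rank_nullity[OF hom_bd, of ?E K] finK dim_chains[OF finK, of p, where 'k='k] c by simp
qed

lemma bd_le: "V.dim (boundaries K p :: (nat set \<Rightarrow> 'k::field) set) \<le> V.dim (cycles K p :: (nat set \<Rightarrow> 'k) set)"
proof (rule dim_mono')
  show "boundaries K p \<subseteq> (cycles K p :: (nat set \<Rightarrow> 'k) set)"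
    unfolding boundaries_def cycles_def using bd_chains bd_bd by auto
  show "cycles K p \<subseteq> V.span ((ind :: nat set \<Rightarrow> nat set \<Rightarrow> 'k::field) ` {s\<in>K. int (card s) = p + 1})"
    using chains_sub unfolding cycles_def by auto
  show "finite ((ind :: nat set \<Rightarrow> nat set \<Rightarrow> 'k::field) ` {s\<in>K. int (card s) = p + 1})" using finK by simp
qed

lemma indep_up:
  fixes U :: "nat set set" and v :: "nat set \<Rightarrow> nat" and pot :: "nat set \<Rightarrow> nat"
  assumes UK: "U \<subseteq> K" and Uc: "\<And>\<tau>. \<tau> \<in> U \<Longrightarrow> int (card \<tau>) = p + 2" and Uv: "\<And>\<tau>. \<tau> \<in> U \<Longrightarrow> v \<tau> \<in> \<tau>"
    and pot: "\<And>\<tau> \<tau>'. \<tau> \<in> U \<Longrightarrow> \<tau>' \<in> U \<Longrightarrow> \<tau> \<noteq> \<tau>' \<Longrightarrow> \<tau>' - {v \<tau>'} \<subseteq> \<tau> \<Longrightarrow> pot \<tau> < pot \<tau>'"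
  shows "card U \<le> V.dim (boundaries K p :: (nat set \<Rightarrow> 'k::field) set)"
proof -
  define h :: "nat set \<Rightarrow> nat set \<Rightarrow> 'k" where "h \<tau> = boundary K (ind \<tau>)" for \<tau>
  have fU: "finite U" using finK UK finite_subset by auto
  have hv: "h \<tau> (\<tau> - {v \<tau>}) = bsign \<tau> (v \<tau>)" if "\<tau> \<in> U" for \<tau>
  proof -
    have ft: "finite \<tau>" using finS UK that by auto
    have "card \<tau> = Suc (card (\<tau> - {v \<tau>}))" using card.remove[OF ft Uv[OF that]] .
    moreover have "\<tau> - (\<tau> - {v \<tau>}) = {v \<tau>}" using Uv[OF that] by auto
    ultimately show ?thesis using UK that by (auto simp: h_def bd_ind)
  qed
  have hz: "pot \<tau> < pot \<tau>0" if "\<tau> \<in> U" "\<tau>0 \<in> U" "\<tau> \<noteq> \<tau>0" "h \<tau> (\<tau>0 - {v \<tau>0}) \<noteq> 0" for \<tau> \<tau>0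
  proof -
    have "\<tau>0 - {v \<tau>0} \<subseteq> \<tau>" using that(4) by (auto simp: h_def bd_ind split: if_splits)
    then show ?thesis using pot that by auto
  qed
  have core: "\<forall>\<tau>\<in>U. g \<tau> = 0" if g: "(\<Sum>\<tau>\<in>U. (\<lambda>x. g \<tau> * h \<tau> x)) = 0" for g
  proof (rule ccontr)
    assume "\<not> (\<forall>\<tau>\<in>U. g \<tau> = 0)"
    then have ne: "{\<tau>\<in>U. g \<tau> \<noteq> 0} \<noteq> {}" by auto
    let ?Z = "{\<tau>\<in>U. g \<tau> \<noteq> 0}"
    have fZ: "finite (pot ` ?Z)" using fU by simp
    have "Min (pot ` ?Z) \<in> pot ` ?Z" using Min_in[OF fZ] ne by simp
    then obtain \<tau>0 where t00: "\<tau>0 \<in> ?Z" "pot \<tau>0 = Min (pot ` ?Z)" by auto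
    have t0: "\<tau>0 \<in> ?Z" "\<forall>\<tau>\<in>?Z. pot \<tau>0 \<le> pot \<tau>"
      using t00 Min_le[OF fZ] by auto
    let ?r = "\<tau>0 - {v \<tau>0}"
    have "0 = (\<Sum>\<tau>\<in>U. (\<lambda>x. g \<tau> * h \<tau> x)) ?r" using g by simp
    also have "\<dots> = (\<Sum>\<tau>\<in>U. g \<tau> * h \<tau> ?r)" by (simp add: sum_apply')
    also have "\<dots> = g \<tau>0 * h \<tau>0 ?r + (\<Sum>\<tau>\<in>U - {\<tau>0}. g \<tau> * h \<tau> ?r)"
      using sum.remove[OF fU, of \<tau>0 "\<lambda>\<tau>. g \<tau> * h \<tau> ?r"] t0(1) by simp
    also have "(\<Sum>\<tau>\<in>U - {\<tau>0}. g \<tau> * h \<tau> ?r) = 0"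
    proof (rule sum.neutral, rule ballI)
      fix \<tau> assume "\<tau> \<in> U - {\<tau>0}"
      then have "\<tau> \<in> U" "\<tau> \<noteq> \<tau>0" by auto
      show "g \<tau> * h \<tau> ?r = 0"
      proof (rule ccontr)
        assume "g \<tau> * h \<tau> ?r \<noteq> 0"
        then have "g \<tau> \<noteq> 0" "h \<tau> ?r \<noteq> 0" by auto
        then have "pot \<tau> < pot \<tau>0" using hz[of \<tau> \<tau>0] \<open>\<tau> \<in> U\<close> \<open>\<tau> \<noteq> \<tau>0\<close> t0(1) by auto
        moreover have "pot \<tau>0 \<le> pot \<tau>" using t0(2) \<open>\<tau> \<in> U\<close> \<open>g \<tau> \<noteq> 0\<close> by auto
        ultimately show False by simp
      qed
    qed
    finally have "g \<tau>0 * h \<tau>0 ?r = 0" by simp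
    then show False using t0(1) hv bsign_nz by auto
  qed
  have inj: "inj_on h U"
  proof (rule inj_onI, rule ccontr)
    fix a b assume ab: "a \<in> U" "b \<in> U" "h a = h b" "a \<noteq> b"
    have "h b (a - {v a}) \<noteq> 0" using hv[OF ab(1)] ab(3) bsign_nz by metis
    then have 1: "pot b < pot a" using hz ab by auto
    have "h a (b - {v b}) \<noteq> 0" using hv[OF ab(2)] ab(3) bsign_nz by metis
    then have "pot a < pot b" using hz ab by auto
    then show False using 1 by simp
  qed
  have ind: "V.independent (h ` U)"
    unfolding V.independent_explicit_module
  proof (intro allI impI)
    fix T u w
    assume T: "finite T" "T \<subseteq> h ` U" and s: "(\<Sum>v\<in>T. (\<lambda>x. u v * v x)) = 0" and w: "w \<in> T"
    define U' where "U' = {\<tau>\<in>U. h \<tau> \<in> T}"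
    have TU: "T = h ` U'" using T by (auto simp: U'_def)
    have injU': "inj_on h U'" using inj by (rule inj_on_subset) (auto simp: U'_def)
    define g where "g \<tau> = (if \<tau> \<in> U' then u (h \<tau>) else 0)" for \<tau>
    have "(\<Sum>\<tau>\<in>U. (\<lambda>x. g \<tau> * h \<tau> x)) = (\<Sum>\<tau>\<in>U'. (\<lambda>x. g \<tau> * h \<tau> x))"
      by (rule sum.mono_neutral_right) (use fU in \<open>auto simp: U'_def g_def fun_eq_iff\<close>)
    also have "\<dots> = (\<Sum>\<tau>\<in>U'. (\<lambda>x. u (h \<tau>) * h \<tau> x))" by (rule sum.cong) (auto simp: g_def)
    also have "\<dots> = (\<Sum>v\<in>T. (\<lambda>x. u v * v x))" unfolding TU by (rule sum.reindex[OF injU', symmetric, unfolded comp_def])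
    finally have "\<forall>\<tau>\<in>U. g \<tau> = 0" using core s by simp
    moreover obtain \<tau>w where "\<tau>w \<in> U'" "w = h \<tau>w" using w TU by auto
    ultimately show "u w = 0" by (auto simp: g_def U'_def)
  qed
  have sub: "h ` U \<subseteq> boundaries K p"
  proof
    fix x assume "x \<in> h ` U"
    then obtain \<tau> where t: "\<tau> \<in> U" "x = h \<tau>" by auto
    have "ind \<tau> \<in> (chains K (p + 1) :: (nat set \<Rightarrow> 'k) set)"
      using t UK Uc[OF t(1)] by (auto simp: chains_def ind_def split: if_splits)
    then show "x \<in> boundaries K p" using t by (auto simp: boundaries_def h_def)
  qed
  have sp: "boundaries K p \<subseteq> V.span ((ind :: nat set \<Rightarrow> nat set \<Rightarrow> 'k::field) ` {s\<in>K. int (card s) = p + 1})"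
    using bd_chains chains_sub unfolding boundaries_def by blast
  have "card U = card (h ` U)" using card_image[OF inj] by simp
  also have "\<dots> \<le> V.dim (boundaries K p :: (nat set \<Rightarrow> 'k::field) set)"
    by (rule card_le_dim'[OF sub ind sp]) (use finK in simp)
  finally show ?thesis .
qed

end

definition run :: "nat \<Rightarrow> nat set \<Rightarrow> nat \<Rightarrow> bool" where
  "run t s e \<longleftrightarrow> t \<le> e \<and> (\<forall>y. e < y + t \<longrightarrow> y \<le> e \<longrightarrow> y \<notin> s)"
definition fe :: "nat \<Rightarrow> nat set \<Rightarrow> nat" where "fe t s = (LEAST e. run t s e)"
definition tog :: "nat set \<Rightarrow> nat \<Rightarrow> nat set" where "tog s x = (if x \<in> s then s - {x} else insert x s)"
definition PP :: "nat \<Rightarrow> nat \<Rightarrow> nat set" where "PP n t = {x. x mod (t+1) = 1 \<and> x + t + 1 \<le> n}"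
definition valid :: "nat \<Rightarrow> nat \<Rightarrow> nat set \<Rightarrow> nat \<Rightarrow> bool" where "valid n t s x \<longleftrightarrow> run t (tog s x) n \<and> fe t (tog s x) = n"
definition lv :: "nat \<Rightarrow> nat \<Rightarrow> nat set \<Rightarrow> nat" where
  "lv n t s = (if fe t s < n then Suc (fe t s) else (LEAST x. x \<in> PP n t \<and> valid n t s x))"
definition noncrit :: "nat \<Rightarrow> nat \<Rightarrow> nat set \<Rightarrow> bool" where
  "noncrit n t s \<longleftrightarrow> fe t s < n \<or> (\<exists>x\<in>PP n t. valid n t s x)"

lemma omega_iff:
  assumes "1 \<le> t" "t \<le> n"
  shows "s \<in> omega n t \<longleftrightarrow> s \<subseteq> {1..n} \<and> (\<exists>e\<le>n. run t s e)"
proof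
  assume "s \<in> omega n t"
  then obtain i where i: "1 \<le> i" "i \<le> n - t + 1" "s \<subseteq> {1..n} - {i..i + t - 1}"
    unfolding omega_def omega_facets_def by auto
  have "run t s (i + t - 1)" unfolding run_def using i assms by auto
  moreover have "i + t - 1 \<le> n" using i assms by auto
  ultimately show "s \<subseteq> {1..n} \<and> (\<exists>e\<le>n. run t s e)" using i by auto
next
  assume "s \<subseteq> {1..n} \<and> (\<exists>e\<le>n. run t s e)"
  then obtain e where e: "s \<subseteq> {1..n}" "e \<le> n" "run t s e" by auto
  define i where "i = e + 1 - t"
  have i: "1 \<le> i" "i \<le> n - t + 1" "i + t - 1 = e" using e assms by (auto simp: i_def run_def)
  have "s \<subseteq> {1..n} - {i..i + t - 1}" using e i unfolding run_def by auto
  then show "s \<in> omega n t" unfolding omega_def omega_facets_def using i by blast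
qed

lemma run_mono: "run t s e \<Longrightarrow> r \<subseteq> s \<Longrightarrow> run t r e"
  unfolding run_def by auto

lemma fe_le: "run t s e \<Longrightarrow> fe t s \<le> e"
  unfolding fe_def by (rule Least_le)

lemma fe_run: "run t s e \<Longrightarrow> run t s (fe t s)"
  unfolding fe_def by (rule LeastI)

lemma fe_min: "e < fe t s \<Longrightarrow> \<not> run t s e"
  unfolding fe_def by (rule not_less_Least)

lemma fe_ge: "run t s e \<Longrightarrow> t \<le> fe t s"
  using fe_run run_def by blast

lemma fe_subset: "run t s e \<Longrightarrow> r \<subseteq> s \<Longrightarrow> fe t r \<le> fe t s"
  by (meson fe_le fe_run run_mono)

lemma fe_eqI: "run t s e \<Longrightarrow> (\<And>e'. e' < e \<Longrightarrow> \<not> run t s e') \<Longrightarrow> fe t s = e"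
  unfolding fe_def by (rule Least_equality) (auto simp: not_less[symmetric])

lemma PP_space: "x \<in> PP n t \<Longrightarrow> y \<in> PP n t \<Longrightarrow> y < x \<Longrightarrow> y + t + 1 \<le> x"
proof -
  assume a: "x \<in> PP n t" "y \<in> PP n t" "y < x"
  then have "x mod (t+1) = y mod (t+1)" by (simp add: PP_def)
  then have "(t+1) dvd (x - y)" using a(3) by (simp add: mod_eq_dvd_iff_nat)
  then obtain k where k: "x - y = (t+1) * k" by auto
  have "k \<noteq> 0"
  proof
    assume "k = 0" with k have "x - y = 0" by simp
    with a(3) show False by simp
  qed
  then show ?thesis using k a(3) by (cases k) auto
qed

lemma PP_pos: "x \<in> PP n t \<Longrightarrow> 1 \<le> x"
  by (auto simp: PP_def intro: ccontr)


lemma tog_tog[simp]: "tog (tog s x) x = s"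
  unfolding tog_def by auto

locale om =
  fixes n t :: nat
  assumes t1: "1 \<le> t" and tn: "t \<le> n"
begin

abbreviation "K \<equiv> omega n t"

lemma Kchar: "s \<in> K \<longleftrightarrow> s \<subseteq> {1..n} \<and> (\<exists>e\<le>n. run t s e)"
  using omega_iff[OF t1 tn] .

lemma K_fe: "s \<in> K \<Longrightarrow> fe t s \<le> n \<and> run t s (fe t s) \<and> t \<le> fe t s"
  using Kchar fe_le fe_run fe_ge by (meson order_trans)

lemma K_sub: "s \<in> K \<Longrightarrow> s \<subseteq> {1..n}"
  using Kchar by blast

lemma K_I: "s \<subseteq> {1..n} \<Longrightarrow> run t s e \<Longrightarrow> e \<le> n \<Longrightarrow> s \<in> K"
  using Kchar by blast

lemma K_down: "s \<in> K \<Longrightarrow> r \<subseteq> s \<Longrightarrow> r \<in> K"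
  using Kchar run_mono by (meson order_trans)

lemma K_fin: "finite K"
proof -
  have "K \<subseteq> Pow {1..n}" using K_sub by auto
  then show ?thesis by (rule finite_subset) simp
qed

lemma K_finS: "s \<in> K \<Longrightarrow> finite s"
  using K_sub finite_subset by blast

lemma fcx: "fcx K"
  by unfold_locales (use K_fin K_finS K_down in auto)

lemma inv0:
  assumes sK: "s \<in> K" and f: "fe t s < n"
  shows "tog s (Suc (fe t s)) \<in> K \<and> fe t (tog s (Suc (fe t s))) = fe t s"
proof -
  let ?x = "Suc (fe t s)"
  let ?s = "tog s ?x"
  have same: "z \<in> ?s \<longleftrightarrow> z \<in> s" if "z \<le> fe t s" for z
    using that unfolding tog_def by auto
  have r: "run t s (fe t s)" using K_fe sK by auto
  have r': "run t ?s (fe t s)" using r same unfolding run_def by auto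
  have "fe t ?s = fe t s"
  proof (rule fe_eqI[OF r'])
    fix e' assume e': "e' < fe t s"
    show "\<not> run t ?s e'"
    proof
      assume "run t ?s e'"
      then have "run t s e'" using same e' unfolding run_def by auto
      then show False using fe_min e' by blast
    qed
  qed
  moreover have "?s \<subseteq> {1..n}" using K_sub[OF sK] f K_fe[OF sK] t1 unfolding tog_def by auto
  ultimately show ?thesis using K_I r' f by auto
qed

lemma ins_valid:
  assumes sK: "s \<in> K" and f: "fe t s = n" and y: "y \<in> PP n t"
  shows "fe t (insert y s) = n"
proof -
  have r: "run t s n" using K_fe[OF sK] f by auto
  have r': "run t (insert y s) n" using r y unfolding run_def PP_def by auto
  show ?thesis
  proof (rule fe_eqI[OF r'])
    fix e' assume "e' < n"
    then show "\<not> run t (insert y s) e'" using fe_min[of e' t s] f run_mono[of t "insert y s" e' s] by auto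
  qed
qed

lemma valid_K:
  assumes "valid n t s x" "x \<in> PP n t" "s \<in> K"
  shows "tog s x \<in> K"
proof -
  have "run t (tog s x) n" using assms(1) by (simp add: valid_def)
  moreover have "tog s x \<subseteq> {1..n}" using K_sub[OF assms(3)] PP_pos[OF assms(2)] assms(2)
    unfolding tog_def PP_def by auto
  ultimately show ?thesis using K_I by auto
qed

lemma ins_valid':
  assumes sK: "s \<in> K" and f: "fe t s = n" and y: "y \<in> PP n t" and ny: "y \<notin> s"
  shows "valid n t s y"
proof -
  have "run t (insert y s) n" using K_fe[OF sK] f y unfolding run_def PP_def by auto
  then show ?thesis using ins_valid[OF sK f y] ny by (simp add: valid_def tog_def)
qed

lemma invalid_prop:
  assumes sK: "s \<in> K" and f: "fe t s = n" and x: "x \<in> PP n t" and y: "y \<in> PP n t" and yx: "y < x"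
    and nv: "\<not> valid n t s y"
  shows "\<not> valid n t (tog s x) y"
proof -
  have ys: "y \<in> s" using ins_valid' sK f y nv by blast
  have rs: "run t s n" using K_fe[OF sK] f by auto
  have r1: "run t (s - {y}) n" using run_mono[OF rs] by blast
  have "fe t (s - {y}) \<noteq> n" using nv ys r1 by (simp add: valid_def tog_def)
  moreover have "fe t (s - {y}) \<le> n" using fe_le[OF r1] .
  ultimately have lt: "fe t (s - {y}) < n" by simp
  define e where "e = fe t (s - {y})"
  have re: "run t (s - {y}) e" using fe_run[OF r1] e_def by simp
  have yin: "e < y + t \<and> y \<le> e"
  proof (rule ccontr)
    assume "\<not> (e < y + t \<and> y \<le> e)"
    then have "run t s e" using re unfolding run_def by auto
    then have "fe t s \<le> e" by (rule fe_le)
    then show False using lt f e_def by simp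
  qed
  have sp: "y + t + 1 \<le> x" using PP_space[OF x y yx] .
  have "run t (tog (tog s x) y) e"
  proof -
    have "y \<in> tog s x" using ys yx unfolding tog_def by auto
    then have "tog (tog s x) y = tog s x - {y}" unfolding tog_def by simp
    moreover have "z \<in> tog s x - {y} \<longleftrightarrow> z \<in> s - {y}" if "z \<le> e" for z
      using that yin sp unfolding tog_def by auto
    ultimately show ?thesis using re unfolding run_def by auto
  qed
  then have "fe t (tog (tog s x) y) < n" using fe_le lt e_def by (meson le_less_trans)
  then show ?thesis by (simp add: valid_def)
qed

lemma noncrit_K:
  assumes "s \<in> K" "noncrit n t s"
  shows "tog s (lv n t s) \<in> K \<and> noncrit n t (tog s (lv n t s)) \<and> lv n t (tog s (lv n t s)) = lv n t s"
proof (cases "fe t s < n")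
  case True
  then have lv: "lv n t s = Suc (fe t s)" by (simp add: lv_def)
  have i: "tog s (Suc (fe t s)) \<in> K \<and> fe t (tog s (Suc (fe t s))) = fe t s" using inv0[OF assms(1) True] .
  then show ?thesis using True lv by (simp add: lv_def noncrit_def)
next
  case False
  then have f: "fe t s = n" using K_fe[OF assms(1)] by simp
  then have ex: "\<exists>x. x \<in> PP n t \<and> valid n t s x" using assms(2) by (auto simp: noncrit_def)
  define x where "x = lv n t s"
  have x: "x = (LEAST x. x \<in> PP n t \<and> valid n t s x)" using f by (simp add: lv_def x_def)
  have xP: "x \<in> PP n t" "valid n t s x" using LeastI_ex[OF ex] x by auto
  have s'K: "tog s x \<in> K" using valid_K[OF xP(2,1) assms(1)] .
  have f': "fe t (tog s x) = n" using xP(2) by (simp add: valid_def)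
  have v': "valid n t (tog s x) x" using f assms(1) K_fe[OF assms(1)] by (simp add: valid_def)
  have nc: "noncrit n t (tog s x)" using v' xP(1) by (auto simp: noncrit_def)
  have "lv n t (tog s x) = (LEAST y. y \<in> PP n t \<and> valid n t (tog s x) y)" using f' by (simp add: lv_def)
  also have "\<dots> = x"
  proof (rule Least_equality)
    show "x \<in> PP n t \<and> valid n t (tog s x) x" using xP v' by simp
    fix y assume y: "y \<in> PP n t \<and> valid n t (tog s x) y"
    show "x \<le> y"
    proof (rule ccontr)
      assume "\<not> x \<le> y"
      then have yx: "y < x" by simp
      then have "\<not> (y \<in> PP n t \<and> valid n t s y)" using x not_less_Least by blast
      then have "\<not> valid n t s y" using y by simp
      then show False using invalid_prop[OF assms(1) f xP(1) _ yx] y by blast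
    qed
  qed
  finally show ?thesis using s'K nc x_def by simp
qed

end

definition pot :: "nat set \<Rightarrow> nat" where "pot s = (\<Sum>x\<in>s. 2 ^ x)"

lemma tog_in: "x \<in> s \<Longrightarrow> tog s x = s - {x}" by (simp add: tog_def)
lemma tog_notin: "x \<notin> s \<Longrightarrow> tog s x = insert x s" by (simp add: tog_def)

context om begin

lemma grad:
  assumes tK: "\<tau> \<in> K" and nt: "noncrit n t \<tau>" and lt: "lv n t \<tau> \<in> \<tau>" and u: "u \<in> \<tau>" "u \<noteq> lv n t \<tau>"
    and ns: "noncrit n t (\<tau> - {u})" and ls: "lv n t (\<tau> - {u}) \<notin> \<tau> - {u}"
  shows "u < lv n t (\<tau> - {u})"
proof -
  let ?s = "\<tau> - {u}"
  have sK: "?s \<in> K" using K_down[OF tK] by blast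
  have rt: "run t \<tau> (fe t \<tau>)" using K_fe[OF tK] by auto
  have fsub: "fe t ?s \<le> fe t \<tau>" using fe_subset[OF rt] by blast
  have case_lt: "u < lv n t ?s" if "fe t ?s < fe t \<tau>"
  proof -
    define e where "e = fe t ?s"
    have fn: "e < n" using that K_fe[OF tK] e_def by simp
    have lv: "lv n t ?s = Suc e" using fn by (simp add: lv_def e_def)
    have re: "run t ?s e" using K_fe[OF sK] e_def by auto
    have "u \<le> e"
    proof (rule ccontr)
      assume "\<not> u \<le> e"
      then have "run t \<tau> e" using re unfolding run_def by auto
      then show False using fe_min that e_def by blast
    qed
    then show ?thesis using lv by simp
  qed
  show ?thesis
  proof (cases "fe t ?s < fe t \<tau>")
    case True then show ?thesis using case_lt by blast
  next
    case False
    then have eq: "fe t ?s = fe t \<tau>" using fsub by simp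
    show ?thesis
    proof (cases "fe t \<tau> < n")
      case True
      then have "lv n t ?s = lv n t \<tau>" using eq by (simp add: lv_def)
      then have False using ls lt u by auto
      then show ?thesis ..
    next
      case False
      then have fn: "fe t \<tau> = n" using K_fe[OF tK] by simp
      then have fn': "fe t ?s = n" using eq by simp
      define x where "x = lv n t \<tau>"
      define w where "w = lv n t ?s"
      have exx: "\<exists>x. x \<in> PP n t \<and> valid n t \<tau> x" using nt fn by (auto simp: noncrit_def)
      have xdef: "x = (LEAST x. x \<in> PP n t \<and> valid n t \<tau> x)" using fn by (simp add: lv_def x_def)
      have xP: "x \<in> PP n t" "valid n t \<tau> x" using LeastI_ex[OF exx] xdef by auto
      have exw: "\<exists>x. x \<in> PP n t \<and> valid n t ?s x" using ns fn' by (auto simp: noncrit_def)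
      have wdef: "w = (LEAST x. x \<in> PP n t \<and> valid n t ?s x)" using fn' by (simp add: lv_def w_def)
      have wP: "w \<in> PP n t" "valid n t ?s w" using LeastI_ex[OF exw] wdef by auto
      have wu: "w \<noteq> u"
      proof
        assume "w = u"
        then have "tog ?s w = \<tau>" using u unfolding tog_def by auto
        moreover have "lv n t (tog ?s (lv n t ?s)) = lv n t ?s" using noncrit_K[OF sK ns] by blast
        ultimately have "lv n t \<tau> = w" unfolding w_def by simp
        then show False using \<open>w = u\<close> u(2) by simp
      qed
      have wt: "w \<notin> \<tau>" using ls wu w_def by auto
      have "valid n t \<tau> w" using ins_valid'[OF tK fn wP(1) wt] .
      then have "x \<le> w" using xdef wP(1) by (simp add: Least_le)
      moreover have "x \<noteq> w" using wt lt x_def by auto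
      ultimately have xw: "x < w" by simp
      then have "\<not> (x \<in> PP n t \<and> valid n t ?s x)" unfolding wdef by (rule not_less_Least)
      then have nvx: "\<not> valid n t ?s x" using xP(1) by blast
      have xs: "x \<in> ?s" using lt u x_def by auto
      have rs: "run t ?s n" using K_fe[OF sK] fn' by auto
      have r1: "run t (?s - {x}) n" by (rule run_mono[OF rs]) blast
      have tg: "tog ?s x = ?s - {x}" using xs by (simp add: tog_def)
      have "fe t (?s - {x}) \<noteq> n" using nvx r1 unfolding valid_def tg by blast
      then have lt2: "fe t (?s - {x}) < n" using fe_le[OF r1] by simp
      define e where "e = fe t (?s - {x})"
      have re: "run t (?s - {x}) e" using fe_run[OF r1] e_def by simp
      have xin: "e < x + t \<and> x \<le> e"
      proof (rule ccontr)
        assume "\<not> (e < x + t \<and> x \<le> e)"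
        then have "run t ?s e" using re unfolding run_def by auto
        then have "fe t ?s \<le> e" by (rule fe_le)
        then show False using lt2 fn' e_def by simp
      qed
      have uin: "e < u + t \<and> u \<le> e"
      proof (rule ccontr)
        assume "\<not> (e < u + t \<and> u \<le> e)"
        then have "run t (\<tau> - {x}) e" using re unfolding run_def by auto
        then have "fe t (\<tau> - {x}) \<le> e" by (rule fe_le)
        moreover have "fe t (\<tau> - {x}) = n" using xP(2) lt x_def by (simp add: valid_def tog_def)
        ultimately show False using lt2 e_def by simp
      qed
      have "x + t + 1 \<le> w" using PP_space[OF wP(1) xP(1) xw] .
      then show ?thesis using xin uin w_def by simp
    qed
  qed
qed

lemma pot_step:
  assumes "finite \<tau>" "u \<in> \<tau>" "w \<notin> \<tau>" "u < w"
  shows "pot \<tau> < pot (insert w (\<tau> - {u}))"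
proof -
  have "pot \<tau> = 2 ^ u + pot (\<tau> - {u})" using sum.remove[OF assms(1,2), of "\<lambda>x. 2 ^ x"] unfolding pot_def by simp
  moreover have "pot (insert w (\<tau> - {u})) = 2 ^ w + pot (\<tau> - {u})" using assms unfolding pot_def by simp
  moreover have "(2::nat) ^ u < 2 ^ w" using assms(4) by simp
  ultimately show ?thesis by simp
qed

lemma pot_up:
  assumes t: "\<tau> \<in> K" "noncrit n t \<tau>" "lv n t \<tau> \<in> \<tau>"
    and t': "\<tau>' \<in> K" "noncrit n t \<tau>'" "lv n t \<tau>' \<in> \<tau>'"
    and ne: "\<tau> \<noteq> \<tau>'" and cd: "card \<tau> = card \<tau>'" and sub: "\<tau>' - {lv n t \<tau>'} \<subseteq> \<tau>"
  shows "pot \<tau> < pot \<tau>'"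
proof -
  let ?s = "\<tau>' - {lv n t \<tau>'}"
  have tg: "tog \<tau>' (lv n t \<tau>') = ?s" using t'(3) by (rule tog_in)
  have I0: "?s \<in> K \<and> noncrit n t ?s \<and> lv n t ?s = lv n t \<tau>'" using noncrit_K[OF t'(1,2)] unfolding tg .
  note I = conjunct1[OF I0] conjunct1[OF conjunct2[OF I0]] conjunct2[OF conjunct2[OF I0]]
  have ft: "finite \<tau>" "finite \<tau>'" using K_finS[OF t(1)] K_finS[OF t'(1)] .
  have cs: "card ?s = card \<tau> - 1" using card_Diff_singleton[OF t'(3)] cd by simp
  have fs: "finite ?s" using ft(2) by simp
  have "\<tau>' \<noteq> {}" using t'(3) by blast
  then have "card \<tau>' \<ge> 1" using ft(2) by (simp add: Suc_le_eq card_gt_0_iff)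
  then have "card (\<tau> - ?s) = 1" using card_Diff_subset[OF fs sub] cs cd by simp
  then obtain u where u: "\<tau> - ?s = {u}" by (meson card_1_singletonE)
  have uin: "u \<in> \<tau>" using u by blast
  have seq: "?s = \<tau> - {u}" using u sub by blast
  have ulv: "u \<noteq> lv n t \<tau>"
  proof
    assume ul: "u = lv n t \<tau>"
    then have "?s = tog \<tau> (lv n t \<tau>)" using seq tog_in[OF t(3)] by simp
    then have "lv n t ?s = lv n t \<tau>" using noncrit_K[OF t(1,2)] by simp
    then have "lv n t \<tau>' = lv n t \<tau>" using I by simp
    then have "\<tau>' = insert (lv n t \<tau>) (\<tau> - {lv n t \<tau>})" using seq ul t'(3) by auto
    then show False using ne t(3) by auto
  qed
  have ws: "lv n t ?s \<notin> ?s" using I by simp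
  have "u < lv n t (\<tau> - {u})" using grad[OF t uin ulv] I(2) seq ws by simp
  then have uw: "u < lv n t \<tau>'" using I seq by simp
  have wt: "lv n t \<tau>' \<notin> \<tau>" using ws seq uw by auto
  have "\<tau>' = insert (lv n t \<tau>') (\<tau> - {u})" using seq t'(3) by auto
  then show ?thesis using pot_step[OF ft(1) uin wt uw] by simp
qed

end

definition C0 :: "nat \<Rightarrow> nat \<Rightarrow> nat set" where
  "C0 n t = {y. 1 \<le> y \<and> y + t + 1 \<le> n \<and> (y mod (t+1) = 1 \<or> y mod (t+1) = 0)} \<union> {y. 1 \<le> y \<and> y + t = n}"

lemma C0_I: "1 \<le> y \<Longrightarrow> y + t + 1 \<le> n \<Longrightarrow> y mod (t+1) = 1 \<or> y mod (t+1) = 0 \<Longrightarrow> y \<in> C0 n t"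
  unfolding C0_def by blast

lemma mod_block:
  fixes k d t :: nat
  assumes "d \<le> t"
  shows "(k * (t+1) + d) mod (t+1) = d"
proof -
  have "(k * (t+1) + d) mod (t+1) = d mod (t+1)" by (rule euclidean_semiring_cancel_class.mod_mult_self3)
  also have "\<dots> = d" using assms by simp
  finally show ?thesis .
qed

lemma run_D: "run t s e \<Longrightarrow> e < y + t \<Longrightarrow> y \<le> e \<Longrightarrow> y \<notin> s"
  unfolding run_def by blast

context om begin

lemma blk:
  assumes sK: "s \<in> K" and f: "fe t s = n" and nc: "\<not> noncrit n t s" and nt: "t + 1 \<le> n"
    and p: "p \<in> PP n t" and prev: "p = 1 \<or> p - 1 \<in> s"
  shows "p \<in> s \<and> (\<forall>y. p < y \<and> y < p + t \<longrightarrow> y \<notin> s) \<and> p + t \<in> s \<and> p + 2 * t \<le> n"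
proof -
  have rs: "run t s n" using K_fe[OF sK] f by auto
  have nts: "n - t \<in> s"
  proof (rule ccontr)
    assume a: "n - t \<notin> s"
    have "run t s (n - 1)" unfolding run_def
    proof (intro conjI allI impI)
      show "t \<le> n - 1" using nt by simp
      fix y assume y: "n - 1 < y + t" "y \<le> n - 1"
      show "y \<notin> s"
      proof (cases "y = n - t")
        case True then show ?thesis using a by simp
      next
        case False
        then have "n < y + t" "y \<le> n" using y nt by auto
        then show ?thesis using run_D[OF rs] by blast
      qed
    qed
    then have "fe t s \<le> n - 1" by (rule fe_le)
    then show False using f nt by simp
  qed
  have nv: "\<not> valid n t s p" using nc p by (auto simp: noncrit_def)
  have ps: "p \<in> s" using ins_valid'[OF sK f p] nv by blast
  have r1: "run t (s - {p}) n" by (rule run_mono[OF rs]) blast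
  have tg: "tog s p = s - {p}" using ps by (rule tog_in)
  have "fe t (s - {p}) \<noteq> n" using nv r1 unfolding valid_def tg by blast
  then have lt: "fe t (s - {p}) < n" using fe_le[OF r1] by simp
  define e where "e = fe t (s - {p})"
  have re: "run t (s - {p}) e" using fe_run[OF r1] unfolding e_def .
  have pin: "e < p + t \<and> p \<le> e"
  proof (rule ccontr)
    assume "\<not> (e < p + t \<and> p \<le> e)"
    then have "run t s e" using re unfolding run_def by auto
    then have "fe t s \<le> e" by (rule fe_le)
    then show False using lt f e_def by simp
  qed
  have pP: "p + t + 1 \<le> n" "1 \<le> p" using p PP_pos[OF p] by (auto simp: PP_def)
  have en: "e < n - t"
  proof (rule ccontr)
    assume "\<not> e < n - t"
    then have "n - t \<le> e" by simp
    moreover have "e < (n - t) + t" using lt e_def nt by simp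
    moreover have "n - t \<noteq> p" using pP by simp
    ultimately have "n - t \<notin> s" using re unfolding run_def by auto
    then show False using nts by simp
  qed
  have ee: "e = p + t - 1"
  proof (cases "p = 1")
    case True
    have "t \<le> e" using re by (simp add: run_def)
    then show ?thesis using pin True by simp
  next
    case False
    then have pm: "p - 1 \<in> s" using prev by simp
    have "\<not> (e < (p - 1) + t)"
    proof
      assume "e < (p - 1) + t"
      moreover have "p - 1 \<le> e" using pin by arith
      moreover have "p - 1 \<noteq> p" using pP by simp
      ultimately have "p - 1 \<notin> s" using re unfolding run_def by auto
      then show False using pm by simp
    qed
    then show ?thesis using pin pP by arith
  qed
  have mid: "\<forall>y. p < y \<and> y < p + t \<longrightarrow> y \<notin> s"
  proof (intro allI impI)
    fix y assume y: "p < y \<and> y < p + t"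
    then have "e < y + t" "y \<le> e" using ee pP by auto
    then have "y \<notin> s - {p}" using re unfolding run_def by blast
    then show "y \<notin> s" using y by simp
  qed
  have le: "p + 2 * t \<le> n" using en ee pP by simp
  have pt: "p + t \<in> s"
  proof (cases "p + t = n - t")
    case True then show ?thesis using nts by simp
  next
    case False
    then have lt3: "p + t < n" using le by simp
    show ?thesis
    proof (rule ccontr)
      assume a: "p + t \<notin> s"
      have "run t s (p + t)" unfolding run_def
      proof (intro conjI allI impI)
        show "t \<le> p + t" by simp
        fix y assume "p + t < y + t" "y \<le> p + t"
        then have "p < y" by simp
        then show "y \<notin> s" using mid a \<open>y \<le> p + t\<close> by (cases "y = p + t") auto
      qed
      then have "fe t s \<le> p + t" by (rule fe_le)
      then show False using f lt3 by simp
    qed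
  qed
  show ?thesis using ps mid pt le by blast
qed


lemma nts_lem:
  assumes sK: "s \<in> K" and f: "fe t s = n" and nt: "t + 1 \<le> n"
  shows "n - t \<in> s"
proof (rule ccontr)
  assume a: "n - t \<notin> s"
  have rs: "run t s n" using K_fe[OF sK] f by auto
  have "run t s (n - 1)" unfolding run_def
  proof (intro conjI allI impI)
    show "t \<le> n - 1" using nt by simp
    fix y assume y: "n - 1 < y + t" "y \<le> n - 1"
    show "y \<notin> s"
    proof (cases "y = n - t")
      case True then show ?thesis using a by simp
    next
      case False
      then have "n < y + t" "y \<le> n" using y nt by auto
      then show ?thesis using run_D[OF rs] by blast
    qed
  qed
  then have "fe t s \<le> n - 1" by (rule fe_le)
  then show False using f nt by simp
qed

lemma blocks:
  assumes sK: "s \<in> K" and f: "fe t s = n" and nc: "\<not> noncrit n t s" and nt: "t + 1 \<le> n"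
    and p: "p \<in> PP n t"
  shows "p \<in> s \<and> (\<forall>y. p < y \<and> y < p + t \<longrightarrow> y \<notin> s) \<and> p + t \<in> s \<and> p + 2 * t \<le> n"
proof -
  let ?Q = "\<lambda>p. p \<in> s \<and> (\<forall>y. p < y \<and> y < p + t \<longrightarrow> y \<notin> s) \<and> p + t \<in> s \<and> p + 2 * t \<le> n"
  have "\<forall>k. k * (t+1) + 1 \<in> PP n t \<longrightarrow> ?Q (k * (t+1) + 1)"
  proof
    fix k show "k * (t+1) + 1 \<in> PP n t \<longrightarrow> ?Q (k * (t+1) + 1)"
    proof (induction k)
      case 0 show ?case
      proof
        assume "0 * (t+1) + 1 \<in> PP n t"
        then have P: "1 \<in> PP n t" by simp
        show "?Q (0 * (t+1) + 1)" using blk[OF sK f nc nt P] by simp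
      qed
    next
      case (Suc k)
      show ?case
      proof
        assume P1: "Suc k * (t+1) + 1 \<in> PP n t"
        have e: "Suc k * (t+1) + 1 = k * (t+1) + 1 + t + 1" by simp
        have "(k * (t+1) + 1) mod (t+1) = 1" using mod_block[of 1 t k] t1 by simp
        moreover have "k * (t+1) + 1 + t + 1 \<le> n" using P1 unfolding PP_def by simp
        ultimately have P0: "k * (t+1) + 1 \<in> PP n t" unfolding PP_def by simp
        then have "k * (t+1) + 1 + t \<in> s" using Suc.IH by blast
        then have "Suc k * (t+1) + 1 - 1 \<in> s" by (simp add: algebra_simps)
        then show "?Q (Suc k * (t+1) + 1)" using blk[OF sK f nc nt P1] by blast
      qed
    qed
  qed
  moreover have "p = (p div (t+1)) * (t+1) + 1"
    using p div_mult_mod_eq[of p "t+1"] unfolding PP_def by simp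
  ultimately show ?thesis using p by metis
qed

lemma crit_char:
  assumes sK: "s \<in> K" and nc: "\<not> noncrit n t s"
  shows "s = C0 n t \<and> (n mod (t+1) = 0 \<or> n mod (t+1) = t)"
proof -
  have f: "fe t s = n" using nc K_fe[OF sK] by (auto simp: noncrit_def)
  have rs: "run t s n" using K_fe[OF sK] f by auto
  have ss: "s \<subseteq> {1..n}" using K_sub[OF sK] .
  show ?thesis
  proof (cases "t + 1 \<le> n")
    case False
    then have nt: "n = t" using tn by simp
    have "s = {}"
    proof (rule ccontr)
      assume "s \<noteq> {}"
      then obtain y where y: "y \<in> s" by auto
      then have "1 \<le> y" "y \<le> n" using ss by auto
      then have "y \<notin> s" using run_D[OF rs] nt by simp
      then show False using y by simp
    qed
    moreover have "C0 n t = {}" using nt by (auto simp: C0_def)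
    ultimately show ?thesis using nt by simp
  next
    case True
    note nt = True
    have nts: "n - t \<in> s" using nts_lem[OF sK f nt] .
    have B: "\<And>p. p \<in> PP n t \<Longrightarrow> p \<in> s \<and> (\<forall>y. p < y \<and> y < p + t \<longrightarrow> y \<notin> s) \<and> p + t \<in> s \<and> p + 2 * t \<le> n"
      using blocks[OF sK f nc nt] by blast
    have mem: "y \<in> s \<longleftrightarrow> y \<in> C0 n t" for y
    proof (cases "1 \<le> y \<and> y + t + 1 \<le> n")
      case True
      define k where "k = (y - 1) div (t+1)"
      define d where "d = (y - 1) mod (t+1)"
      have yk: "y = k * (t+1) + 1 + d" using True div_mult_mod_eq[of "y - 1" "t+1"] unfolding k_def d_def by simp
      have dt: "d \<le> t" unfolding d_def by (simp add: less_Suc_eq_le)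
      have pP: "k * (t+1) + 1 \<in> PP n t" using mod_block[of 1 t k] t1 True yk unfolding PP_def by simp
      note Bp = B[OF pP]
      show ?thesis
      proof (cases "d = 0")
        case True
        then have "y mod (t+1) = 1" using yk mod_block[of 1 t k] t1 by simp
        then show ?thesis using Bp True yk \<open>1 \<le> y \<and> y + t + 1 \<le> n\<close> by (simp add: C0_def)
      next
        case False
        show ?thesis
        proof (cases "d = t")
          case True
          then have "y = (k + 1) * (t+1)" using yk by (simp add: algebra_simps)
          then have "y mod (t+1) = 0" by (simp only: mod_mult_self2_is_0)
          then show ?thesis using Bp True yk \<open>1 \<le> y \<and> y + t + 1 \<le> n\<close> by (simp add: C0_def)
        next
          case False
          have m: "y mod (t+1) = 1 + d" using yk mod_block[of "1 + d" t k] \<open>d \<noteq> t\<close> dt by (simp add: add.assoc)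
          have "y \<notin> s" using Bp yk \<open>d \<noteq> 0\<close> \<open>d \<noteq> t\<close> dt by auto
          moreover have "y \<notin> C0 n t" using m \<open>d \<noteq> t\<close> \<open>d \<noteq> 0\<close> dt \<open>1 \<le> y \<and> y + t + 1 \<le> n\<close> by (auto simp: C0_def)
          ultimately show ?thesis by simp
        qed
      qed
    next
      case False
      show ?thesis
      proof (cases "y = n - t")
        case True then show ?thesis using nts nt by (auto simp: C0_def)
      next
        case yne: False
        have "y \<notin> s"
        proof
          assume ys: "y \<in> s"
          then have "1 \<le> y" "y \<le> n" using ss by auto
          then have "n < y + t" using False yne by auto
          then show False using run_D[OF rs] \<open>y \<le> n\<close> ys by blast
        qed
        moreover have "y \<notin> C0 n t" using False yne by (auto simp: C0_def)
        ultimately show ?thesis by simp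
      qed
    qed
    have res: "n mod (t+1) = 0 \<or> n mod (t+1) = t"
    proof -
      define q where "q = (n - t - 1) div (t+1)"
      define r where "r = (n - t - 1) mod (t+1)"
      have nq: "n - t - 1 = q * (t+1) + r" unfolding q_def r_def by (rule div_mult_mod_eq[symmetric])
      have rt: "r \<le> t" unfolding r_def by (simp add: less_Suc_eq_le)
      show ?thesis
      proof (cases "r = 0")
        case True
        then have "n = (q + 1) * (t+1)" using nq nt by (simp add: algebra_simps)
        then have "n mod (t+1) = 0" by (simp only: mod_mult_self2_is_0)
        then show ?thesis by simp
      next
        case False
        have "q * (t+1) + 1 \<in> PP n t" using mod_block[of 1 t q] t1 nq nt False unfolding PP_def by simp
        then have "q * (t+1) + 1 + 2 * t \<le> n" using B by blast
        then have "r = t" using nq nt rt by simp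
        then have "n = (q + 1) * (t+1) + t" using nq nt by (simp add: algebra_simps)
        then show ?thesis using mod_block[of t t "q+1"] by simp
      qed
    qed
    show ?thesis using mem res by blast
  qed
qed


lemma C0_crit:
  assumes res: "n mod (t+1) = 0 \<or> n mod (t+1) = t"
  shows "C0 n t \<in> K \<and> \<not> noncrit n t (C0 n t)"
proof (cases "t + 1 \<le> n")
  case False
  then have nt: "n = t" using tn by simp
  have C: "C0 n t = {}" using nt by (auto simp: C0_def)
  have r: "run t {} t" by (simp add: run_def)
  have "{} \<in> K" using K_I[OF _ r] nt by simp
  moreover have "fe t {} = t" by (rule fe_eqI[OF r]) (simp add: run_def)
  moreover have "PP n t = {}" using nt by (auto simp: PP_def)
  ultimately show ?thesis using C nt by (simp add: noncrit_def)
next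
  case True
  note nt = True
  have sub: "C0 n t \<subseteq> {1..n}" by (auto simp: C0_def)
  have rn: "run t (C0 n t) n" unfolding run_def using t1 tn by (auto simp: C0_def)
  have K: "C0 n t \<in> K" using K_I[OF sub rn] by simp
  have fe: "fe t (C0 n t) = n"
  proof (rule fe_eqI[OF rn])
    fix e assume e: "e < n"
    show "\<not> run t (C0 n t) e"
    proof
      assume re: "run t (C0 n t) e"
      then have te: "t \<le> e" by (simp add: run_def)
      show False
      proof (cases "n - t \<le> e")
        case True
        have "n - t \<in> C0 n t" using nt by (auto simp: C0_def)
        moreover have "e < (n - t) + t" using e nt by simp
        ultimately show False using run_D[OF re _ True] by blast
      next
        case False
        define y0 where "y0 = e + 1 - t"
        define r where "r = y0 mod (t+1)"
        define q where "q = y0 div (t+1)"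
        have y0q: "y0 = q * (t+1) + r" unfolding q_def r_def by (rule div_mult_mod_eq[symmetric])
        have rt: "r \<le> t" unfolding r_def by (simp add: less_Suc_eq_le)
        have y01: "1 \<le> y0" using te unfolding y0_def by simp
        obtain y where y: "y \<in> C0 n t" "e < y + t" "y \<le> e"
        proof (cases "r \<le> 1")
          case True
          then have "y0 mod (t+1) = 1 \<or> y0 mod (t+1) = 0" unfolding r_def by auto
          moreover have "y0 + t + 1 \<le> n" using False te t1 unfolding y0_def by simp
          ultimately have "y0 \<in> C0 n t" using y01 by (simp add: C0_def)
          moreover have "e < y0 + t" "y0 \<le> e" using te t1 unfolding y0_def by auto
          ultimately show ?thesis using that by blast
        next
          case False
          define y where "y = (q + 1) * (t+1)"
          have m0: "y mod (t+1) = 0" unfolding y_def by (simp only: mod_mult_self2_is_0)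
          have yy: "y = y0 + (t + 1 - r)" using y0q rt unfolding y_def by (simp add: algebra_simps)
          have ye: "y \<le> e" using yy False te rt unfolding y0_def by arith
          have ey: "e < y + t" using yy te unfolding y0_def by simp
          have y1: "1 \<le> y" using yy y01 by simp
          have yn: "y + t + 1 \<le> n" using ye \<open>\<not> n - t \<le> e\<close> by simp
          have "y \<in> C0 n t" using C0_I[OF y1 yn] m0 by blast
          then show ?thesis using that ey ye by blast
        qed
        then show False using run_D[OF re] by blast
      qed
    qed
  qed
  have inv: "\<not> valid n t (C0 n t) x" if x: "x \<in> PP n t" for x
  proof -
    have xP: "x mod (t+1) = 1" "x + t + 1 \<le> n" "1 \<le> x" using x PP_pos[OF x] unfolding PP_def by auto
    have xC: "x \<in> C0 n t" using xP by (simp add: C0_def)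
    have tg: "tog (C0 n t) x = C0 n t - {x}" using xC by (rule tog_in)
    define k where "k = x div (t+1)"
    have xk: "x = k * (t+1) + 1" using xP(1) div_mult_mod_eq[of x "t+1"] unfolding k_def by simp
    have rr: "run t (C0 n t - {x}) (x + t - 1)" unfolding run_def
    proof (intro conjI allI impI)
      show "t \<le> x + t - 1" using xP by simp
      fix y assume y: "x + t - 1 < y + t" "y \<le> x + t - 1"
      show "y \<notin> C0 n t - {x}"
      proof (cases "y = x")
        case True then show ?thesis by simp
      next
        case False
        define d where "d = y - x"
        have d: "1 \<le> d" "d + 1 \<le> t" "y = k * (t+1) + (1 + d)" using y False xP xk unfolding d_def by auto
        have ym: "y mod (t+1) = 1 + d" using mod_block[of "1 + d" t k] d by simp
        have "y + t \<noteq> n"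
        proof
          assume yn: "y + t = n"
          have "n = (k + 1) * (t+1) + d" using yn d by (simp add: algebra_simps)
          then have "n mod (t+1) = d" using mod_block[of d t "k+1"] d by simp
          then show False using res d by auto
        qed
        then show ?thesis using ym d by (auto simp: C0_def)
      qed
    qed
    have "fe t (C0 n t - {x}) \<le> x + t - 1" using fe_le[OF rr] .
    then have "fe t (C0 n t - {x}) < n" using xP by arith
    then show ?thesis unfolding valid_def tg by simp
  qed
  show ?thesis using K fe inv by (auto simp: noncrit_def)
qed

end

definition Aset :: "nat \<Rightarrow> nat \<Rightarrow> nat set" where
  "Aset t m = {y. 1 \<le> y \<and> y \<le> m \<and> (y mod (t+1) = 1 \<or> y mod (t+1) = 0)}"

lemma Aset_blk:
  fixes t :: nat assumes t1: "1 \<le> t" and e: "e \<le> t + 1"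
  shows "y \<in> Aset t (j * (t+1) + e) \<longleftrightarrow> y \<in> Aset t (j * (t+1)) \<or> (j * (t+1) < y \<and> y \<le> j * (t+1) + e \<and> (y = j * (t+1) + 1 \<or> y = j * (t+1) + t + 1))"
proof (cases "y \<le> j * (t+1)")
  case True then show ?thesis by (auto simp: Aset_def)
next
  case False
  define d where "d = y - j * (t+1)"
  have yd: "y = j * (t+1) + d" "1 \<le> d" using False unfolding d_def by auto
  show ?thesis
  proof (cases "d = t + 1")
    case True
    then have "y = (j + 1) * (t+1)" using yd by (simp add: algebra_simps)
    then have "y mod (t+1) = 0" by (simp only: mod_mult_self2_is_0)
    then show ?thesis using yd True False by (auto simp: Aset_def)
  next
    case dne: False
    show ?thesis
    proof (cases "d \<le> e")
      case True
      then have "d \<le> t" using e dne by simp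
      then have "y mod (t+1) = d" using mod_block[of d t j] yd by simp
      then show ?thesis using yd dne \<open>d \<le> t\<close> False t1 True by (auto simp: Aset_def)
    next
      case False
      then show ?thesis using yd \<open>\<not> y \<le> j * (t+1)\<close> by (auto simp: Aset_def)
    qed
  qed
qed

lemma Aset_card:
  fixes t :: nat assumes t1: "1 \<le> t"
  shows "card (Aset t (j * (t+1))) = 2 * j \<and> card (Aset t (j * (t+1) + t)) = 2 * j + 1"
proof (induction j)
  case 0
  have "Aset t 0 = {}" by (auto simp: Aset_def)
  moreover have "Aset t t = {1}"
  proof -
    have "y \<in> Aset t t \<longleftrightarrow> y = 1" for y
    proof
      assume "y \<in> Aset t t"
      then have "y \<in> {y. 1 \<le> y \<and> y \<le> t \<and> (y mod (t+1) = 1 \<or> y mod (t+1) = 0)}" by (simp only: Aset_def)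
      then have yy: "1 \<le> y \<and> y \<le> t \<and> (y mod (t+1) = 1 \<or> y mod (t+1) = 0)" by (rule CollectD)
      note y = conjunct1[OF yy] conjunct1[OF conjunct2[OF yy]] conjunct2[OF conjunct2[OF yy]]
      then have m: "y mod (t+1) = y" by simp
      have "y = 1 \<or> y = 0" using y(3) unfolding m .
      then show "y = 1" using y(1) by auto
    qed (use t1 in \<open>auto simp: Aset_def\<close>)
    then show ?thesis by blast
  qed
  ultimately show ?case by simp
next
  case (Suc j)
  let ?b = "j * (t+1)"
  have fin: "finite (Aset t m)" for m by (rule finite_subset[of _ "{..m}"]) (auto simp: Aset_def)
  have s1: "Aset t (Suc j * (t+1)) = insert (?b + 1) (insert (?b + t + 1) (Aset t ?b))"
  proof -
    have e: "Suc j * (t+1) = ?b + (t + 1)" by simp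
    have "y \<in> Aset t (Suc j * (t+1)) \<longleftrightarrow> y \<in> insert (?b + 1) (insert (?b + t + 1) (Aset t ?b))" for y
    proof -
      have "y \<in> Aset t (Suc j * (t+1)) \<longleftrightarrow> y \<in> Aset t ?b \<or> (?b < y \<and> y \<le> ?b + (t+1) \<and> (y = ?b + 1 \<or> y = ?b + t + 1))"
        unfolding e by (rule Aset_blk[OF t1 order_refl])
      also have "\<dots> \<longleftrightarrow> y \<in> insert (?b + 1) (insert (?b + t + 1) (Aset t ?b))" by auto
      finally show ?thesis .
    qed
    then show ?thesis by (rule set_eqI)
  qed
  have s2: "Aset t (Suc j * (t+1) + t) = insert (Suc j * (t+1) + 1) (Aset t (Suc j * (t+1)))"
  proof -
    let ?c = "Suc j * (t+1)"
    have "y \<in> Aset t (?c + t) \<longleftrightarrow> y \<in> insert (?c + 1) (Aset t ?c)" for y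
    proof -
      have "y \<in> Aset t (?c + t) \<longleftrightarrow> y \<in> Aset t ?c \<or> (?c < y \<and> y \<le> ?c + t \<and> (y = ?c + 1 \<or> y = ?c + t + 1))"
        by (rule Aset_blk[OF t1]) simp
      also have "\<dots> \<longleftrightarrow> y \<in> insert (?c + 1) (Aset t ?c)" using t1 by auto
      finally show ?thesis .
    qed
    then show ?thesis by (rule set_eqI)
  qed
  have n1: "?b + 1 \<notin> Aset t ?b" "?b + t + 1 \<notin> Aset t ?b" "?b + 1 \<noteq> ?b + t + 1"
    using t1 by (auto simp: Aset_def)
  have c1: "card (Aset t (Suc j * (t+1))) = 2 * Suc j"
    unfolding s1 using Suc.IH n1 fin[of ?b] by simp
  have n2: "Suc j * (t+1) + 1 \<notin> Aset t (Suc j * (t+1))" by (auto simp: Aset_def)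
  have c2: "card (Aset t (Suc j * (t+1) + t)) = 2 * Suc j + 1"
    unfolding s2 using c1 n2 fin[of "Suc j * (t+1)"] by simp
  show ?case using c1 c2 by simp
qed


context om begin

lemma C0_split:
  assumes nt: "t + 1 \<le> n"
  shows "C0 n t = insert (n - t) (Aset t (n - t - 1)) \<and> n - t \<notin> Aset t (n - t - 1)"
proof -
  have "y \<in> C0 n t \<longleftrightarrow> y \<in> insert (n - t) (Aset t (n - t - 1))" for y
  proof -
    have a: "y + t + 1 \<le> n \<longleftrightarrow> y \<le> n - t - 1" using nt by arith
    have b: "(1 \<le> y \<and> y + t = n) \<longleftrightarrow> y = n - t" using nt by arith
    show ?thesis unfolding C0_def Aset_def Un_iff insert_iff mem_Collect_eq a b by argo
  qed
  moreover have "\<not> (n - t \<le> n - t - 1)" using nt by arith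
  then have "n - t \<notin> Aset t (n - t - 1)" unfolding Aset_def by blast
  ultimately show ?thesis by blast
qed

lemma Afin: "finite (Aset t m)"
  by (rule finite_subset[of _ "{..m}"]) (auto simp: Aset_def)

lemma C0_card0:
  assumes r: "n mod (t+1) = 0"
  shows "card (C0 n t) = 2 * (n div (t+1)) - 1"
proof -
  define k where "k = n div (t+1)"
  have nk: "n = k * (t+1)" using r div_mult_mod_eq[of n "t+1"] unfolding k_def by simp
  have k1: "1 \<le> k" using nk tn t1 by (cases k) auto
  have nt: "t + 1 \<le> n" using nk k1 by (metis mult_1 mult_le_mono1)
  have e: "n - t - 1 = (k - 1) * (t+1)" using nk k1 by (cases k) (auto simp: algebra_simps)
  have "card (C0 n t) = Suc (card (Aset t (n - t - 1)))" using C0_split[OF nt] Afin by simp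
  also have "\<dots> = Suc (2 * (k - 1))" unfolding e using Aset_card[OF t1, of "k - 1"] by simp
  also have "\<dots> = 2 * k - 1" using k1 by simp
  finally show ?thesis unfolding k_def .
qed

lemma C0_cardt:
  assumes r: "n mod (t+1) = t"
  shows "card (C0 n t) = 2 * ((n + 1) div (t+1)) - 2"
proof -
  define k where "k = n div (t+1)"
  have nk: "n = k * (t+1) + t" using r div_mult_mod_eq[of n "t+1"] unfolding k_def by simp
  have n1: "(n + 1) div (t+1) = k + 1"
  proof -
    have "n + 1 = (k + 1) * (t+1)" using nk by (simp add: algebra_simps)
    then show ?thesis by (simp only: nonzero_mult_div_cancel_right[of "t+1" "k+1"])
  qed
  show ?thesis
  proof (cases "k = 0")
    case True
    then have "n = t" using nk by simp
    then have "C0 n t = {}" by (auto simp: C0_def)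
    then show ?thesis using n1 True by simp
  next
    case False
    then have nt: "t + 1 \<le> n" using nk by (cases k) auto
    have e: "n - t - 1 = (k - 1) * (t+1) + t" using nk False by (cases k) (auto simp: algebra_simps)
    have "card (C0 n t) = Suc (card (Aset t (n - t - 1)))" using C0_split[OF nt] Afin by simp
    also have "\<dots> = Suc (2 * (k - 1) + 1)" unfolding e using Aset_card[OF t1, of "k - 1"] by simp
    also have "\<dots> = 2 * (k + 1) - 2" using False by simp
    finally show ?thesis using n1 by simp
  qed
qed

definition "Cr p = {s\<in>K. \<not> noncrit n t s \<and> int (card s) = p + 1}"
definition "Up p = {s\<in>K. noncrit n t s \<and> lv n t s \<in> s \<and> int (card s) = p + 1}"
definition "Dn p = {s\<in>K. noncrit n t s \<and> lv n t s \<notin> s \<and> int (card s) = p + 1}"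

lemma count: "card {s\<in>K. int (card s) = p + 1} = card (Cr p) + card (Up p) + card (Dn p)"
proof -
  have "{s\<in>K. int (card s) = p + 1} = Cr p \<union> Up p \<union> Dn p" by (auto simp: Cr_def Up_def Dn_def)
  moreover have "finite (Cr p)" "finite (Up p)" "finite (Dn p)" using K_fin by (auto simp: Cr_def Up_def Dn_def)
  moreover have "Cr p \<inter> Up p = {}" "(Cr p \<union> Up p) \<inter> Dn p = {}" by (auto simp: Cr_def Up_def Dn_def)
  ultimately show ?thesis by (simp add: card_Un_disjoint)
qed

lemma dn_up: "card (Dn p) = card (Up (p + 1))"
proof -
  have "bij_betw (\<lambda>\<tau>. \<tau> - {lv n t \<tau>}) (Up (p + 1)) (Dn p)"
  proof (rule bij_betw_byWitness[where f' = "\<lambda>\<sigma>. insert (lv n t \<sigma>) \<sigma>"])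
    show "\<forall>a\<in>Up (p + 1). insert (lv n t (a - {lv n t a})) (a - {lv n t a}) = a"
    proof
      fix a assume a: "a \<in> Up (p + 1)"
      then have "a \<in> K" "noncrit n t a" "lv n t a \<in> a" by (auto simp: Up_def)
      then have "lv n t (a - {lv n t a}) = lv n t a" using noncrit_K[of a] tog_in[of "lv n t a" a] by simp
      then show "insert (lv n t (a - {lv n t a})) (a - {lv n t a}) = a" using \<open>lv n t a \<in> a\<close> by auto
    qed
    show "\<forall>b\<in>Dn p. insert (lv n t b) b - {lv n t (insert (lv n t b) b)} = b"
    proof
      fix b assume b: "b \<in> Dn p"
      then have "b \<in> K" "noncrit n t b" "lv n t b \<notin> b" by (auto simp: Dn_def)
      then have "lv n t (insert (lv n t b) b) = lv n t b" using noncrit_K[of b] tog_notin[of "lv n t b" b] by simp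
      then show "insert (lv n t b) b - {lv n t (insert (lv n t b) b)} = b" using \<open>lv n t b \<notin> b\<close> by auto
    qed
    show "(\<lambda>\<tau>. \<tau> - {lv n t \<tau>}) ` Up (p + 1) \<subseteq> Dn p"
    proof
      fix x assume "x \<in> (\<lambda>\<tau>. \<tau> - {lv n t \<tau>}) ` Up (p + 1)"
      then obtain a where a: "a \<in> Up (p + 1)" "x = a - {lv n t a}" by auto
      then have aa: "a \<in> K" "noncrit n t a" "lv n t a \<in> a" "int (card a) = p + 2" by (auto simp: Up_def)
      have tg: "tog a (lv n t a) = x" using tog_in[OF aa(3)] a by simp
      have I: "x \<in> K" "noncrit n t x" "lv n t x = lv n t a" using noncrit_K[OF aa(1,2)] tg by auto
      have "finite a" using K_finS[OF aa(1)] .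
      then have "card x = card a - 1" using a(2) aa(3) by simp
      moreover have "card a \<ge> 1" using \<open>finite a\<close> aa(3) card_gt_0_iff[of a] by (auto simp: Suc_le_eq)
      ultimately have "int (card x) = p + 1" using aa(4) by simp
      then show "x \<in> Dn p" using I a(2) by (auto simp: Dn_def)
    qed
    show "(\<lambda>\<sigma>. insert (lv n t \<sigma>) \<sigma>) ` Dn p \<subseteq> Up (p + 1)"
    proof
      fix x assume "x \<in> (\<lambda>\<sigma>. insert (lv n t \<sigma>) \<sigma>) ` Dn p"
      then obtain b where b: "b \<in> Dn p" "x = insert (lv n t b) b" by auto
      then have bb: "b \<in> K" "noncrit n t b" "lv n t b \<notin> b" "int (card b) = p + 1" by (auto simp: Dn_def)
      have tg: "tog b (lv n t b) = x" using tog_notin[OF bb(3)] b by simp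
      have I: "x \<in> K" "noncrit n t x" "lv n t x = lv n t b" using noncrit_K[OF bb(1,2)] tg by auto
      have "finite b" using K_finS[OF bb(1)] .
      then have "card x = card b + 1" using b(2) bb(3) by simp
      then have "int (card x) = p + 1 + 1" using bb(4) by simp
      then show "x \<in> Up (p + 1)" using I b(2) by (auto simp: Up_def)
    qed
  qed
  then show ?thesis by (simp add: bij_betw_same_card)
qed

end

context om begin

lemma hom_eq:
  assumes d: "\<And>q. q \<noteq> d \<Longrightarrow> Cr q = {}"
  shows "red_homology_dim TYPE('k::field) K p = card (Cr p)"
proof -
  interpret X: fcx K by (rule fcx)
  define Z where "Z q = V.dim (cycles K q :: (nat set \<Rightarrow> 'k) set)" for q
  define B where "B q = V.dim (boundaries K q :: (nat set \<Rightarrow> 'k) set)" for q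
  define u where "u q = card (Up q)" for q
  define m where "m q = card (Cr q)" for q
  have rn: "Z q + B (q - 1) = m q + u q + u (q + 1)" for q
    using X.rn[of q, where 'k='k] count[of q] dn_up[of q] unfolding Z_def B_def m_def u_def by simp
  have le: "B q \<le> Z q" for q using X.bd_le[of q, where 'k='k] unfolding Z_def B_def by simp
  have ind: "u (q + 1) \<le> B q" for q
  proof -
    have "card (Up (q + 1)) \<le> V.dim (boundaries K q :: (nat set \<Rightarrow> 'k) set)"
    proof (rule X.indep_up[where v = "lv n t" and pot = pot])
      show "Up (q + 1) \<subseteq> K" by (auto simp: Up_def)
      show "int (card \<tau>) = q + 2" if "\<tau> \<in> Up (q + 1)" for \<tau> using that by (auto simp: Up_def)
      show "lv n t \<tau> \<in> \<tau>" if "\<tau> \<in> Up (q + 1)" for \<tau> using that by (auto simp: Up_def)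
      show "pot \<tau> < pot \<tau>'" if "\<tau> \<in> Up (q + 1)" "\<tau>' \<in> Up (q + 1)" "\<tau> \<noteq> \<tau>'" "\<tau>' - {lv n t \<tau>'} \<subseteq> \<tau>" for \<tau> \<tau>'
      proof (rule pot_up)
        show "\<tau> \<in> K" "noncrit n t \<tau>" "lv n t \<tau> \<in> \<tau>" "\<tau>' \<in> K" "noncrit n t \<tau>'" "lv n t \<tau>' \<in> \<tau>'"
          using that by (auto simp: Up_def)
        show "\<tau> \<noteq> \<tau>'" "\<tau>' - {lv n t \<tau>'} \<subseteq> \<tau>" using that by auto
        have "int (card \<tau>) = int (card \<tau>')" using that by (auto simp: Up_def)
        then show "card \<tau> = card \<tau>'" by simp
      qed
    qed
    then show ?thesis unfolding u_def B_def .
  qed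
  have E: "B (q - 1) = u q \<and> B q = u (q + 1)" if "q \<noteq> d" for q
  proof -
    have "m q = 0" using d[OF that] unfolding m_def by simp
    moreover have "u q \<le> B (q - 1)" using ind[of "q - 1"] by simp
    ultimately show ?thesis using rn[of q] le[of q] ind[of q] by linarith
  qed
  have E2: "B (q - 1) = u q" for q
  proof (cases "q = d")
    case False then show ?thesis using E by blast
  next
    case True
    then have "q - 1 \<noteq> d" by simp
    then show ?thesis using E[of "q - 1"] by simp
  qed
  have "red_homology_dim TYPE('k) K p = Z p - B p" unfolding red_homology_dim_def Z_def B_def by simp
  also have "\<dots> = m p"
    using rn[of p] E2[of p] E2[of "p + 1"] by simp
  finally show ?thesis unfolding m_def .
qed

lemma Cr_eq:
  "Cr q = (if (n mod (t+1) = 0 \<or> n mod (t+1) = t) \<and> int (card (C0 n t)) = q + 1 then {C0 n t} else {})"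
proof -
  have "s \<in> Cr q \<longleftrightarrow> s \<in> (if (n mod (t+1) = 0 \<or> n mod (t+1) = t) \<and> int (card (C0 n t)) = q + 1 then {C0 n t} else {})" for s
  proof
    assume "s \<in> Cr q"
    then have s: "s \<in> K" "\<not> noncrit n t s" "int (card s) = q + 1" by (auto simp: Cr_def)
    then show "s \<in> (if (n mod (t+1) = 0 \<or> n mod (t+1) = t) \<and> int (card (C0 n t)) = q + 1 then {C0 n t} else {})"
      using crit_char[OF s(1,2)] by auto
  next
    assume a: "s \<in> (if (n mod (t+1) = 0 \<or> n mod (t+1) = t) \<and> int (card (C0 n t)) = q + 1 then {C0 n t} else {})"
    then have r: "n mod (t+1) = 0 \<or> n mod (t+1) = t" "int (card (C0 n t)) = q + 1" "s = C0 n t"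
      by (auto split: if_splits)
    then show "s \<in> Cr q" using C0_crit[OF r(1)] by (auto simp: Cr_def)
  qed
  then show ?thesis by blast
qed

end

theorem mainTheorem3:
  fixes n t :: nat and p :: int
  assumes "1 \<le> t" and "t \<le> n"
  shows "red_homology_dim TYPE('k::field) (omega n t) p =
    (if n mod (t + 1) = 0 then (if p + 2 = 2 * int n div (int t + 1) then 1 else 0)
     else if n mod (t + 1) = t then (if p + 3 = 2 * (int n + 1) div (int t + 1) then 1 else 0)
     else 0)"
proof -
  interpret om n t using assms by unfold_locales
  define d where "d = int (card (C0 n t)) - 1"
  have h: "red_homology_dim TYPE('k::field) (omega n t) p = card (Cr p)"
    by (rule hom_eq[where d = d]) (auto simp: Cr_eq d_def)
  show ?thesis
  proof (cases "n mod (t + 1) = 0")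
    case True
    define k where "k = n div (t+1)"
    have nk: "n = k * (t+1)" using True div_mult_mod_eq[of n "t+1"] unfolding k_def by simp
    have k1: "1 \<le> k" using nk assms by (cases k) auto
    have cc: "card (C0 n t) = 2 * k - 1" using C0_card0[OF True] unfolding k_def .
    have "2 * int n div (int t + 1) = 2 * int k"
    proof -
      have "2 * int n = (2 * int k) * (int t + 1)" using nk by (simp add: algebra_simps)
      then show ?thesis by simp
    qed
    moreover have "int (card (C0 n t)) = 2 * int k - 1" using cc k1 by simp
    ultimately show ?thesis using h True by (auto simp: Cr_eq)
  next
    case F0: False
    show ?thesis
    proof (cases "n mod (t + 1) = t")
      case True
      define k where "k = (n + 1) div (t+1)"
      have nk: "n + 1 = k * (t+1)"
      proof -
        have "(n + 1) mod (t+1) = 0" using True mod_Suc[of n "t+1"] by simp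
        then show ?thesis using div_mult_mod_eq[of "n+1" "t+1"] unfolding k_def by simp
      qed
      have k1: "1 \<le> k" using nk by (cases k) auto
      have cc: "card (C0 n t) = 2 * k - 2" using C0_cardt[OF True] unfolding k_def .
      have "2 * (int n + 1) div (int t + 1) = 2 * int k"
      proof -
        have "2 * (int n + 1) = (2 * int k) * (int t + 1)" using arg_cong[OF nk, of int] by (simp add: algebra_simps)
        then show ?thesis by simp
      qed
      moreover have "int (card (C0 n t)) = 2 * int k - 2" using cc k1 by simp
      ultimately show ?thesis using h True F0 by (auto simp: Cr_eq)
    next
      case False
      then show ?thesis using h F0 by (simp add: Cr_eq)
    qed
  qed
qed


end
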